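(* There is a constant $C$ such that for every regular unary language $L\subseteq\{a\}^*$, $\mathrm{nsyn}(L)\le C\cdot\mathrm{ns}(L)^2$.
   Context: $\mathrm{ns}(L)$ is the least number of states of an nfa (several initial states allowed) accepting $L$. $\mathrm{nsyn}(L)$ (nondeterministic syntactic complexity) is the least number of states of a subatomic nfa accepting $L$, i.e. an nfa every state of which accepts a language in the boolean subalgebra of $\mathcal{P}(\Sigma^* )$ generated by the two-sided derivatives $u^{-1}Lv^{-1}=\{w:uwv\in L\}$; equivalently, the least degree $|J(S)|$ of a boolean representation $\mathrm{Syn}(L)\to\mathbf{JSL}(S,S)$ extending the canonical representation $[w]_L\mapsto(K\mapsto w^{-1}K)$ on the semilattice of finite unions of left derivatives of $L$. *)

theory Defs
  imports Main
begin

type_synonym 'a nfa = "nat set \<times> nat set \<times> nat set \<times> (nat \<Rightarrow> 'a \<Rightarrow> nat set)"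

definition wf_nfa :: "'a nfa \<Rightarrow> bool" where
  "wf_nfa A = (case A of (Q, I, F, d) \<Rightarrow>
     finite Q \<and> I \<subseteq> Q \<and> F \<subseteq> Q \<and> (\<forall>q\<in>Q. \<forall>x. d q x \<subseteq> Q))"

fun reach :: "(nat \<Rightarrow> 'a \<Rightarrow> nat set) \<Rightarrow> nat set \<Rightarrow> 'a list \<Rightarrow> nat set" where
  "reach d S [] = S"
| "reach d S (x # w) = reach d (\<Union>q\<in>S. d q x) w"

definition lang_from :: "'a nfa \<Rightarrow> nat set \<Rightarrow> 'a list set" where
  "lang_from A S = (case A of (Q, I, F, d) \<Rightarrow> {w. reach d S w \<inter> F \<noteq> {}})"

definition nfa_lang :: "'a nfa \<Rightarrow> 'a list set" where
  "nfa_lang A = lang_from A (fst (snd A))"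

definition nfa_states :: "'a nfa \<Rightarrow> nat set" where
  "nfa_states A = fst A"

definition regular :: "'a list set \<Rightarrow> bool" where
  "regular L = (\<exists>A. wf_nfa A \<and> nfa_lang A = L)"

definition ns :: "'a list set \<Rightarrow> nat" where
  "ns L = (LEAST n. \<exists>A. wf_nfa A \<and> nfa_lang A = L \<and> card (nfa_states A) = n)"

definition two_sided_deriv :: "'a list \<Rightarrow> 'a list set \<Rightarrow> 'a list \<Rightarrow> 'a list set" where
  "two_sided_deriv u L v = {w. u @ w @ v \<in> L}"

inductive_set bool_alg_gen :: "'b set set \<Rightarrow> 'b set set" for G where
  gen: "X \<in> G \<Longrightarrow> X \<in> bool_alg_gen G"
| empty: "{} \<in> bool_alg_gen G"
| compl: "X \<in> bool_alg_gen G \<Longrightarrow> - X \<in> bool_alg_gen G"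
| union: "X \<in> bool_alg_gen G \<Longrightarrow> Y \<in> bool_alg_gen G \<Longrightarrow> X \<union> Y \<in> bool_alg_gen G"

definition two_sided_derivs :: "'a list set \<Rightarrow> 'a list set set" where
  "two_sided_derivs L = {two_sided_deriv u L v | u v. True}"

definition subatomic :: "'a list set \<Rightarrow> 'a nfa \<Rightarrow> bool" where
  "subatomic L A = (\<forall>q\<in>nfa_states A. lang_from A {q} \<in> bool_alg_gen (two_sided_derivs L))"

definition nsyn :: "'a list set \<Rightarrow> nat" where
  "nsyn L = (LEAST n. \<exists>A. wf_nfa A \<and> nfa_lang A = L \<and> subatomic L A
                          \<and> card (nfa_states A) = n)"

end

theory Submission
  imports Defs
begin


lemma bag_inter: "X \<in> bool_alg_gen H \<Longrightarrow> Y \<in> bool_alg_gen H \<Longrightarrow> X \<inter> Y \<in> bool_alg_gen H"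
proof -
  assume a: "X \<in> bool_alg_gen H" "Y \<in> bool_alg_gen H"
  have "- (- X \<union> - Y) \<in> bool_alg_gen H"
    by (intro bool_alg_gen.compl bool_alg_gen.union a)
  then show ?thesis by simp
qed

lemma bag_UNIV: "UNIV \<in> bool_alg_gen H"
  using bool_alg_gen.compl[OF bool_alg_gen.empty, of H] by simp

lemma bag_Inter: "finite S \<Longrightarrow> S \<subseteq> bool_alg_gen H \<Longrightarrow> \<Inter> S \<in> bool_alg_gen H"
  by (induction S rule: finite_induct) (auto intro: bag_inter bag_UNIV)

lemma bag_Union: "finite S \<Longrightarrow> S \<subseteq> bool_alg_gen H \<Longrightarrow> \<Union> S \<in> bool_alg_gen H"
  by (induction S rule: finite_induct) (auto intro: bool_alg_gen.union bool_alg_gen.empty)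

lemma bag_saturated:
  assumes finG: "finite G" and GH: "G \<subseteq> bool_alg_gen H"
    and sat: "\<And>a b. (\<forall>D\<in>G. a \<in> D \<longleftrightarrow> b \<in> D) \<Longrightarrow> a \<in> X \<Longrightarrow> b \<in> X"
  shows "X \<in> bool_alg_gen H"
proof -
  define atS where "atS T = \<Inter> ((\<lambda>D. if D \<in> T then D else - D) ` G)" for T
  define at where "at a = atS {D\<in>G. a \<in> D}" for a
  have atB: "atS T \<in> bool_alg_gen H" for T
    unfolding atS_def
    by (rule bag_Inter) (use finG GH in \<open>auto intro: bool_alg_gen.compl\<close>)
  have mem: "b \<in> at a \<longleftrightarrow> (\<forall>D\<in>G. a \<in> D \<longleftrightarrow> b \<in> D)" for a b
    unfolding at_def atS_def by auto
  have eq: "X = \<Union> (at ` X)"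
  proof
    show "X \<subseteq> \<Union> (at ` X)"
    proof
      fix x assume "x \<in> X"
      moreover have "x \<in> at x" using mem by simp
      ultimately show "x \<in> \<Union> (at ` X)" by blast
    qed
    show "\<Union> (at ` X) \<subseteq> X"
    proof
      fix b assume "b \<in> \<Union> (at ` X)"
      then obtain a where a: "a \<in> X" "b \<in> at a" by blast
      then have "\<forall>D\<in>G. a \<in> D \<longleftrightarrow> b \<in> D" using mem by simp
      then show "b \<in> X" using sat a(1) by blast
    qed
  qed
  have "at ` X \<subseteq> atS ` Pow G" unfolding at_def by auto
  then have fin: "finite (at ` X)" using finite_imageI[OF finite_Pow_iff[THEN iffD2, OF finG]] finite_subset by blast
  have "\<Union> (at ` X) \<in> bool_alg_gen H"
    by (rule bag_Union[OF fin]) (auto simp: at_def intro: atB)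
  then show ?thesis using eq by simp
qed

definition wlk :: "(nat \<Rightarrow> unit \<Rightarrow> nat set) \<Rightarrow> (nat \<Rightarrow> nat) \<Rightarrow> nat \<Rightarrow> bool" where
  "wlk d g l = (\<forall>i<l. g (Suc i) \<in> d (g i) ())"

lemma reach_walk:
  fixes w :: "unit list"
  shows "t \<in> reach d S w \<longleftrightarrow> (\<exists>g. g 0 \<in> S \<and> g (length w) = t \<and> wlk d g (length w))"
proof (induction w arbitrary: S)
  case Nil
  show ?case
  proof
    assume "t \<in> reach d S []"
    then show "\<exists>g. g 0 \<in> S \<and> g (length []) = t \<and> wlk d g (length [])"
      by (intro exI[of _ "\<lambda>_. t"]) (simp add: wlk_def)
  qed (auto simp: wlk_def)
next
  case (Cons x w)
  have x: "x = ()" by (cases x) simp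
  have "t \<in> reach d S (x # w) \<longleftrightarrow> (\<exists>g. g 0 \<in> (\<Union>q\<in>S. d q x) \<and> g (length w) = t \<and> wlk d g (length w))"
    using Cons.IH by simp
  also have "\<dots> \<longleftrightarrow> (\<exists>g. g 0 \<in> S \<and> g (Suc (length w)) = t \<and> wlk d g (Suc (length w)))"
  proof
    assume "\<exists>g. g 0 \<in> (\<Union>q\<in>S. d q x) \<and> g (length w) = t \<and> wlk d g (length w)"
    then obtain g q where q: "q \<in> S" "g 0 \<in> d q x" and g: "g (length w) = t" "wlk d g (length w)" by blast
    define g' where "g' = (\<lambda>i. if i = 0 then q else g (i - 1))"
    have "wlk d g' (Suc (length w))"
      unfolding wlk_def
    proof (intro allI impI)
      fix i assume i: "i < Suc (length w)"
      show "g' (Suc i) \<in> d (g' i) ()"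
      proof (cases i)
        case 0 then show ?thesis using q x by (simp add: g'_def)
      next
        case (Suc j) then show ?thesis using g(2) i by (simp add: g'_def wlk_def)
      qed
    qed
    then show "\<exists>g. g 0 \<in> S \<and> g (Suc (length w)) = t \<and> wlk d g (Suc (length w))"
      using q g by (intro exI[of _ g']) (simp add: g'_def)
  next
    assume "\<exists>g. g 0 \<in> S \<and> g (Suc (length w)) = t \<and> wlk d g (Suc (length w))"
    then obtain g where g: "g 0 \<in> S" "g (Suc (length w)) = t" "wlk d g (Suc (length w))" by blast
    have "g (Suc 0) \<in> d (g 0) ()" using g(3) by (simp add: wlk_def)
    then have "g 1 \<in> (\<Union>q\<in>S. d q x)" using g(1) x by auto
    moreover have "wlk d (\<lambda>i. g (Suc i)) (length w)" using g(3) by (simp add: wlk_def)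
    ultimately show "\<exists>g. g 0 \<in> (\<Union>q\<in>S. d q x) \<and> g (length w) = t \<and> wlk d g (length w)"
      using g(2) by (intro exI[of _ "\<lambda>i. g (Suc i)"]) simp
  qed
  finally show ?case by simp
qed

definition R :: "(nat \<Rightarrow> unit \<Rightarrow> nat set) \<Rightarrow> nat \<Rightarrow> nat \<Rightarrow> nat \<Rightarrow> bool" where
  "R d l s t = (\<exists>g. g 0 = s \<and> g l = t \<and> wlk d g l)"

lemma R_refl: "R d 0 s s"
  unfolding R_def by (intro exI[of _ "\<lambda>_. s"]) (simp add: wlk_def)

lemma R_concat:
  assumes "R d a s t" "R d b t u" shows "R d (a + b) s u"
proof -
  obtain g where g: "g 0 = s" "g a = t" "wlk d g a" using assms(1) R_def by blast
  obtain h where h: "h 0 = t" "h b = u" "wlk d h b" using assms(2) R_def by blast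
  define k where "k = (\<lambda>x. if x \<le> a then g x else h (x - a))"
  have "wlk d k (a + b)"
    unfolding wlk_def
  proof (intro allI impI)
    fix i assume i: "i < a + b"
    show "k (Suc i) \<in> d (k i) ()"
    proof (cases "Suc i \<le> a")
      case True then show ?thesis using g(3) by (simp add: k_def wlk_def)
    next
      case False
      show ?thesis
      proof (cases "i = a")
        case True
        have "h (Suc 0) \<in> d (h 0) ()" using h(3) i True by (simp add: wlk_def)
        then show ?thesis using True h(1) g(2) by (simp add: k_def)
      next
        case False
        then have "i - a < b" "Suc i - a = Suc (i - a)" using i \<open>\<not> Suc i \<le> a\<close> by auto
        then show ?thesis using h(3) False \<open>\<not> Suc i \<le> a\<close> by (auto simp: k_def wlk_def)
      qed
    qed
  qed
  moreover have "k 0 = s" "k (a + b) = u" using g h by (auto simp: k_def)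
  ultimately show ?thesis unfolding R_def by blast
qed

lemma R_rep: "R d p q q \<Longrightarrow> R d (m * p) q q"
  by (induction m) (auto simp: R_refl intro: R_concat)

lemma wlk_cut:
  assumes w: "wlk d g l" and ij: "i < j" "j \<le> l" and eq: "g i = g j"
  shows "wlk d (\<lambda>x. if x \<le> i then g x else g (x + (j - i))) (l - (j - i))"
  unfolding wlk_def
proof (intro allI impI)
  fix x assume x: "x < l - (j - i)"
  show "(if Suc x \<le> i then g (Suc x) else g (Suc x + (j - i))) \<in> d (if x \<le> i then g x else g (x + (j - i))) ()"
  proof (cases "Suc x \<le> i")
    case True then show ?thesis using w x ij by (simp add: wlk_def)
  next
    case False
    show ?thesis
    proof (cases "x = i")
      case True
      have "g (Suc j) \<in> d (g j) ()" using w x ij True by (simp add: wlk_def)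
      then show ?thesis using True eq ij by simp
    next
      case False
      have "g (Suc (x + (j - i))) \<in> d (g (x + (j - i))) ()" using w x ij by (simp add: wlk_def)
      then show ?thesis using False \<open>\<not> Suc x \<le> i\<close> by simp
    qed
  qed
qed

lemma R_cut:
  assumes w: "wlk d g l" "g 0 = s" "g l = t" and ij: "i < j" "j \<le> l" and eq: "g i = g j"
  shows "R d (l - (j - i)) s t"
proof -
  have e: "(if l - (j - i) \<le> i then g (l - (j - i)) else g (l - (j - i) + (j - i))) = t"
  proof (cases "l - (j - i) \<le> i")
    case True
    then have "l = j" using ij by linarith
    then show ?thesis using w eq ij by simp
  next
    case False then show ?thesis using w ij by simp
  qed
  show ?thesis
    unfolding R_def
    apply (rule exI[of _ "\<lambda>x. if x \<le> i then g x else g (x + (j - i))"])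
    using wlk_cut[OF w(1) ij eq] w e by auto
qed

lemma wlk_in:
  assumes "\<And>q. q \<in> Q \<Longrightarrow> d q () \<subseteq> Q" "wlk d g l" "g 0 \<in> Q"
  shows "x \<le> l \<Longrightarrow> g x \<in> Q"
proof (induction x)
  case 0 then show ?case using assms by simp
next
  case (Suc x) then show ?case using assms(1,2) unfolding wlk_def by (meson Suc_le_lessD less_imp_le subsetD)
qed



lemma R_sub:
  assumes "wlk d g l" "a \<le> b" "b \<le> l"
  shows "R d (b - a) (g a) (g b)"
  unfolding R_def
  apply (rule exI[of _ "\<lambda>x. g (x + a)"])
  using assms by (auto simp: wlk_def)

locale unfa =
  fixes Q I F :: "nat set" and d :: "nat \<Rightarrow> unit \<Rightarrow> nat set"
  assumes finQ: "finite Q" and IQ: "I \<subseteq> Q" and FQ: "F \<subseteq> Q" and dQ: "\<And>q. q \<in> Q \<Longrightarrow> d q () \<subseteq> Q"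
begin

definition "nQ = card Q"
definition "Ls = {k. \<exists>i\<in>I. \<exists>f\<in>F. R d k i f}"
definition "Qc = {q\<in>Q. \<exists>l. 0 < l \<and> l \<le> nQ \<and> R d l q q}"
definition "per q = (LEAST l. 0 < l \<and> R d l q q)"
definition "NN = 2*nQ*nQ + 1"
definition PP :: nat where "PP = fact nQ"
definition "W q = {k. \<exists>l<NN. l mod per q = k mod per q \<and>
   (\<exists>l1 l2 i f. l1 + l2 = l \<and> i\<in>I \<and> f\<in>F \<and> R d l1 i q \<and> R d l2 q f)}"
definition "fut x = {j. x + j \<in> Ls}"
definition "V q = {k. \<exists>k'\<ge>NN. k' \<in> W q \<and> fut (k + NN*PP) = fut k'}"

lemma per_props:
  assumes "q \<in> Qc" shows "0 < per q" "per q \<le> nQ" "R d (per q) q q"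
proof -
  obtain l where l: "0 < l" "l \<le> nQ" "R d l q q" using assms unfolding Qc_def by blast
  have "0 < per q \<and> R d (per q) q q" unfolding per_def by (rule LeastI[of _ l]) (use l in auto)
  then show "0 < per q" "R d (per q) q q" by auto
  have "per q \<le> l" unfolding per_def by (rule Least_le) (use l in auto)
  then show "per q \<le> nQ" using l by simp
qed

lemma per_dvd: assumes q: "q \<in> Qc" shows "per q dvd PP"
proof -
  have "1 \<le> per q" using per_props(1)[OF q] by simp
  then show ?thesis unfolding PP_def using per_props(2)[OF q] by (intro dvd_fact) auto
qed

lemma PP_pos: "0 < PP" unfolding PP_def by simp

lemma walk_Q:
  assumes "wlk d g l" "g 0 \<in> Q" "x \<le> l" shows "g x \<in> Q"
  using wlk_in[of Q d g l x] dQ assms by blast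

lemma reduce:
  assumes s: "s \<in> Q" and Rl: "R d l s t" and pp: "0 < pp"
  shows "\<exists>l'. l' \<le> l \<and> l' mod pp = l mod pp \<and> l' < pp*nQ \<and> R d l' s t"
  using Rl
proof (induction l rule: less_induct)
  case (less l)
  show ?case
  proof (cases "l < pp*nQ")
    case True then show ?thesis using less.prems by blast
  next
    case False
    obtain g where g: "g 0 = s" "g l = t" "wlk d g l" using less.prems R_def by blast
    have gQ: "x \<le> l \<Longrightarrow> g x \<in> Q" for x using walk_Q[OF g(3)] g(1) s by auto
    define f where "f x = (g x, x mod pp)" for x
    have "\<not> inj_on f {0..pp*nQ}"
    proof
      assume inj: "inj_on f {0..pp*nQ}"
      have "f ` {0..pp*nQ} \<subseteq> Q \<times> {..<pp}" using gQ False pp by (auto simp: f_def)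
      then have "card {0..pp*nQ} \<le> card (Q \<times> {..<pp})" using card_inj_on_le[OF inj] finQ by blast
      then show False by (simp add: card_cartesian_product nQ_def)
    qed
    then obtain x y where xy: "x \<in> {0..pp*nQ}" "y \<in> {0..pp*nQ}" "x \<noteq> y" "f x = f y"
      unfolding inj_on_def by blast
    have "\<exists>i j. i < j \<and> j \<le> pp*nQ \<and> g i = g j \<and> i mod pp = j mod pp"
    proof (cases "x < y")
      case True then show ?thesis using xy by (intro exI[of _ x] exI[of _ y]) (auto simp: f_def)
    next
      case False then have "y < x" using xy(3) by simp
      then show ?thesis using xy by (intro exI[of _ y] exI[of _ x]) (auto simp: f_def)
    qed
    then obtain i j where ij: "i < j" "j \<le> pp*nQ" "g i = g j" "i mod pp = j mod pp" by blast
    have jl: "j \<le> l" using ij False by simp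
    have R1: "R d (l - (j - i)) s t" using R_cut[OF g(3) g(1) g(2) ij(1) jl ij(3)] .
    obtain c where c: "j - i = pp * c" using ij(1,4) by (metis less_imp_le mod_eq_dvd_iff_nat dvd_def)
    have lt: "l - (j - i) < l" using ij jl by simp
    obtain l' where l': "l' \<le> l - (j - i)" "l' mod pp = (l - (j - i)) mod pp" "l' < pp*nQ" "R d l' s t"
      using less.IH[OF lt R1] by blast
    have "l = (l - (j - i)) + pp * c" using c ij jl by simp
    then have "l mod pp = (l - (j - i)) mod pp" by (metis mod_mult_self2)
    then show ?thesis using l' by (intro exI[of _ l']) auto
  qed
qed

lemma char_left:
  assumes k: "k \<ge> NN" "k \<in> Ls" shows "\<exists>q\<in>Qc. k \<in> W q"
proof -
  obtain i f where if_: "i \<in> I" "f \<in> F" "R d k i f" using k(2) unfolding Ls_def by blast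
  obtain g where g: "g 0 = i" "g k = f" "wlk d g k" using if_(3) R_def by blast
  have iQ: "i \<in> Q" using if_ IQ by auto
  have gQ: "x \<le> k \<Longrightarrow> g x \<in> Q" for x using walk_Q[OF g(3)] g(1) iQ by auto
  have "nQ \<le> nQ * nQ" by (cases nQ) auto
  then have nk: "nQ \<le> k" using k(1) unfolding NN_def by linarith
  have "\<not> inj_on g {0..nQ}"
  proof
    assume inj: "inj_on g {0..nQ}"
    have "g ` {0..nQ} \<subseteq> Q" using gQ nk by auto
    then have "card {0..nQ} \<le> card Q" using card_inj_on_le[OF inj] finQ by blast
    then show False by (simp add: nQ_def)
  qed
  then obtain x y where xy: "x \<in> {0..nQ}" "y \<in> {0..nQ}" "x \<noteq> y" "g x = g y"
    unfolding inj_on_def by blast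
  have "\<exists>a b. a < b \<and> b \<le> nQ \<and> g a = g b"
  proof (cases "x < y")
    case True then show ?thesis using xy by (intro exI[of _ x] exI[of _ y]) auto
  next
    case False then have "y < x" using xy(3) by simp
    then show ?thesis using xy by (intro exI[of _ y] exI[of _ x]) auto
  qed
  then obtain a b where ab: "a < b" "b \<le> nQ" "g a = g b" by blast
  define q where "q = g a"
  have qQ: "q \<in> Q" unfolding q_def using gQ ab nk by auto
  have "R d (b - a) q q" using R_sub[OF g(3), of a b] ab nk unfolding q_def by auto
  then have qc: "q \<in> Qc" unfolding Qc_def using qQ ab by (intro CollectI conjI exI[of _ "b - a"]) auto
  note pq = per_props[OF qc]
  have R1: "R d a i q" using R_sub[OF g(3), of 0 a] ab nk g(1) unfolding q_def by auto
  have R2: "R d (k - a) q f" using R_sub[OF g(3), of a k] ab nk g(2) unfolding q_def by auto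
  obtain l1 where l1: "l1 mod per q = a mod per q" "l1 < per q * nQ" "R d l1 i q"
    using reduce[OF iQ R1 pq(1)] by blast
  obtain l2 where l2: "l2 mod per q = (k - a) mod per q" "l2 < per q * nQ" "R d l2 q f"
    using reduce[OF qQ R2 pq(1)] by blast
  have "per q * nQ \<le> nQ * nQ" using pq(2) by simp
  then have lt: "l1 + l2 < NN" using l1(2) l2(2) unfolding NN_def by linarith
  have "(l1 + l2) mod per q = (a + (k - a)) mod per q"
    using l1(1) l2(1) by (metis mod_add_eq)
  also have "a + (k - a) = k" using ab nk by simp
  finally have "k \<in> W q" unfolding W_def using lt l1(3) l2(3) if_(1,2) by blast
  then show ?thesis using qc by blast
qed

lemma char_right:
  assumes q: "q \<in> Qc" and k: "k \<ge> NN" "k \<in> W q" shows "k \<in> Ls"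
proof -
  obtain l l1 l2 i f where l: "l < NN" "l mod per q = k mod per q" "l1 + l2 = l" "i \<in> I" "f \<in> F"
    "R d l1 i q" "R d l2 q f" using k(2) unfolding W_def by blast
  have "per q dvd (k - l)" using mod_eq_dvd_iff_nat[of l k "per q"] l(1,2) k(1) by simp
  then obtain m where m: "k - l = per q * m" by (auto simp: dvd_def)
  have "R d (m * per q) q q" using R_rep per_props(3)[OF q] by blast
  then have "R d (l1 + m * per q + l2) i f" using l(6,7) by (blast intro: R_concat)
  moreover have "l1 + m * per q + l2 = k" using m l(1,3) k(1) by (simp add: algebra_simps)
  ultimately show ?thesis unfolding Ls_def using l(4,5) by auto
qed

lemma W_add: "q \<in> Qc \<Longrightarrow> (x + per q * c \<in> W q \<longleftrightarrow> x \<in> W q)"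
  unfolding W_def by simp

lemma W_addP: "q \<in> Qc \<Longrightarrow> (x + PP * c \<in> W q \<longleftrightarrow> x \<in> W q)"
proof -
  assume q: "q \<in> Qc"
  obtain e where "PP = per q * e" using per_dvd[OF q] by (auto simp: dvd_def)
  then show ?thesis using W_add[OF q, of x "e * c"] by (simp add: mult.assoc)
qed

lemma char: "k \<ge> NN \<Longrightarrow> (k \<in> Ls \<longleftrightarrow> (\<exists>q\<in>Qc. k \<in> W q))"
  using char_left char_right by blast

lemma Ls_per: assumes k: "k \<ge> NN" shows "k + PP * m \<in> Ls \<longleftrightarrow> k \<in> Ls"
proof -
  have "k + PP * m \<in> Ls \<longleftrightarrow> (\<exists>q\<in>Qc. k + PP * m \<in> W q)" using char[of "k + PP * m"] k by simp
  also have "\<dots> \<longleftrightarrow> (\<exists>q\<in>Qc. k \<in> W q)" using W_addP by blast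
  also have "\<dots> \<longleftrightarrow> k \<in> Ls" using char[of k] k by simp
  finally show ?thesis .
qed

lemma fut_shift: "fut x = fut y \<Longrightarrow> fut (x + c) = fut (y + c)"
proof -
  assume e: "fut x = fut y"
  have "j \<in> fut (x + c) \<longleftrightarrow> c + j \<in> fut x" for j by (simp add: fut_def add.assoc)
  moreover have "j \<in> fut (y + c) \<longleftrightarrow> c + j \<in> fut y" for j by (simp add: fut_def add.assoc)
  ultimately show ?thesis using e by blast
qed

lemma fut_per: assumes "x \<ge> NN" shows "fut (x + PP * m) = fut x"
proof -
  have "x + PP * m + j \<in> Ls \<longleftrightarrow> x + j \<in> Ls" for j
  proof -
    have "x + PP * m + j = (x + j) + PP * m" by simp
    then show ?thesis using Ls_per[of "x + j" m] assms by (simp add: ac_simps)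
  qed
  then show ?thesis unfolding fut_def by blast
qed

lemma fut_fin: "finite (range fut)"
proof -
  have "range fut \<subseteq> fut ` {..<NN + PP}"
  proof
    fix z assume "z \<in> range fut"
    then obtain x where z: "z = fut x" by blast
    show "z \<in> fut ` {..<NN + PP}"
    proof (cases "x < NN")
      case True then show ?thesis using z by auto
    next
      case False
      define r where "r = (x - NN) mod PP"
      have x: "x = (NN + r) + PP * ((x - NN) div PP)" using False unfolding r_def by simp
      have "fut x = fut (NN + r)" using fut_per[of "NN + r" "(x - NN) div PP"] x by simp
      moreover have "NN + r < NN + PP" unfolding r_def using PP_pos by (simp add: mod_less_divisor)
      ultimately show ?thesis using z by auto
    qed
  qed
  then show ?thesis by (rule finite_subset) simp
qed

lemma V_sat: "fut x = fut y \<Longrightarrow> (x \<in> V q \<longleftrightarrow> y \<in> V q)"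
  unfolding V_def using fut_shift[of x y "NN*PP"] by simp

lemma V_step: assumes q: "q \<in> Qc" shows "x + per q \<in> V q \<longleftrightarrow> x \<in> V q"
proof
  assume "x \<in> V q"
  then obtain k' where k': "k' \<ge> NN" "k' \<in> W q" "fut (x + NN*PP) = fut k'" unfolding V_def by blast
  have "fut (x + per q + NN*PP) = fut (k' + per q)" using fut_shift[OF k'(3), of "per q"] by (simp add: algebra_simps)
  moreover have "k' + per q \<in> W q" using W_add[OF q, of k' 1] k'(2) by simp
  ultimately show "x + per q \<in> V q" unfolding V_def using k'(1) by (intro CollectI exI[of _ "k' + per q"]) auto
next
  assume "x + per q \<in> V q"
  then obtain k' where k': "k' \<ge> NN" "k' \<in> W q" "fut (x + per q + NN*PP) = fut k'" unfolding V_def by blast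
  obtain e where e: "PP = per q * e" using per_dvd[OF q] by (auto simp: dvd_def)
  have pl: "per q \<le> PP" using per_dvd[OF q] PP_pos by (simp add: dvd_imp_le)
  define c where "c = PP - per q"
  have c': "c = per q * (e - 1)" unfolding c_def e by (simp add: right_diff_distrib')
  have "fut (x + per q + NN*PP + c) = fut (k' + c)" using fut_shift[OF k'(3)] by simp
  moreover have "x + per q + NN*PP + c = (x + NN*PP) + PP * 1" using pl unfolding c_def by simp
  moreover have "fut ((x + NN*PP) + PP * 1) = fut (x + NN*PP)"
  proof (rule fut_per)
    have "NN*1 \<le> NN*PP" using PP_pos by (intro mult_le_mono2) simp
    then show "NN \<le> x + NN*PP" by linarith
  qed
  moreover have "k' + c \<in> W q" using W_add[OF q, of k' "e - 1"] k'(2) c' by simp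
  ultimately show "x \<in> V q" unfolding V_def using k'(1) by (intro CollectI exI[of _ "k' + c"]) auto
qed

lemma V_mod: assumes q: "q \<in> Qc" shows "x \<in> V q \<longleftrightarrow> x mod per q \<in> V q"
proof -
  have "y + m * per q \<in> V q \<longleftrightarrow> y \<in> V q" for y m
  proof (induction m)
    case (Suc m)
    have "y + Suc m * per q = (y + m * per q) + per q" by simp
    then show ?case unfolding \<open>y + Suc m * per q = (y + m * per q) + per q\<close>
      using V_step[OF q, of "y + m * per q"] Suc.IH by blast
  qed simp
  from this[of "x mod per q" "x div per q"] show ?thesis by (simp only: mod_div_mult_eq)
qed

lemma K1: "k \<ge> NN \<Longrightarrow> (k \<in> Ls \<longleftrightarrow> (\<exists>q\<in>Qc. k \<in> V q))"
proof
  assume k: "k \<ge> NN" "k \<in> Ls"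
  then obtain q where q: "q \<in> Qc" "k \<in> W q" using char_left by blast
  have "k + NN*PP \<in> W q" using W_addP[OF q(1), of k NN] q(2) by (simp add: mult.commute)
  then have "k \<in> V q" unfolding V_def using k(1) by (intro CollectI exI[of _ "k + NN*PP"]) auto
  then show "\<exists>q\<in>Qc. k \<in> V q" using q by blast
next
  assume k: "k \<ge> NN" and "\<exists>q\<in>Qc. k \<in> V q"
  then obtain q k' where q: "q \<in> Qc" "k' \<ge> NN" "k' \<in> W q" "fut (k + NN*PP) = fut k'"
    unfolding V_def by blast
  have "k' \<in> Ls" using char_right q by blast
  then have "0 \<in> fut (k + NN*PP)" using q(4) by (simp add: fut_def)
  then have "k + PP * NN \<in> Ls" by (simp add: fut_def mult.commute)
  then show "k \<in> Ls" using Ls_per k by blast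
qed

end


lemma reach_Un: "reach d S w = (\<Union>s\<in>S. reach d {s} w)"
proof (induction w arbitrary: S)
  case Nil then show ?case by simp
next
  case (Cons x w)
  have "reach d S (x # w) = reach d (\<Union>q\<in>S. d q x) w" by simp
  also have "\<dots> = (\<Union>s\<in>(\<Union>q\<in>S. d q x). reach d {s} w)" by (rule Cons.IH)
  also have "\<dots> = (\<Union>q\<in>S. \<Union>s\<in>d q x. reach d {s} w)" by blast
  also have "\<dots> = (\<Union>q\<in>S. reach d (d q x) w)" by (simp only: Cons.IH[symmetric])
  also have "\<dots> = (\<Union>q\<in>S. reach d {q} (x # w))" by simp
  finally show ?case .
qed

context unfa
begin

definition "M = Suc nQ"
definition "z q r = NN + q * M + r"
definition "Q' = {..<NN} \<union> (\<lambda>(q, r). z q r) ` (SIGMA q:Qc. {..<per q})"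
definition "F' = {i. i < NN \<and> i \<in> Ls} \<union> (\<lambda>(q, r). z q r) ` (SIGMA q:Qc. {r. r < per q \<and> r \<in> V q})"
definition "d' s (u::unit) = (if Suc s < NN then {Suc s} else if Suc s = NN then (\<lambda>q. z q (NN mod per q)) ` Qc
   else {z ((s - NN) div M) (Suc ((s - NN) mod M) mod per ((s - NN) div M))})"
definition "A' = (Q', {0::nat}, F', d')"

lemma per_lt_M: "q \<in> Qc \<Longrightarrow> per q < M"
  using per_props(2)[of q] unfolding M_def by simp

lemma M_pos: "0 < M" unfolding M_def by simp

lemma z_sub: "z q r - NN = r + M * q" unfolding z_def by simp

lemma z_div: assumes "r < M" shows "(z q r - NN) div M = q" "(z q r - NN) mod M = r"
  unfolding z_sub using assms M_pos by simp_all

lemma z_inj: assumes "r < M" "r' < M" "z q r = z q' r'" shows "q = q' \<and> r = r'"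
proof -
  have "q = (z q r - NN) div M" using z_div(1)[OF assms(1)] by simp
  also have "\<dots> = q'" using z_div(1)[OF assms(2)] assms(3) by simp
  finally have "q = q'" .
  moreover have "r = (z q r - NN) mod M" using z_div(2)[OF assms(1)] by simp
  moreover have "\<dots> = r'" using z_div(2)[OF assms(2)] assms(3) by simp
  ultimately show ?thesis by simp
qed

lemma z_ge: "NN \<le> z q r" unfolding z_def by simp

lemma d'_z: assumes "q \<in> Qc" "r < per q" shows "d' (z q r) u = {z q (Suc r mod per q)}"
proof -
  have r: "r < M" using assms per_lt_M by fastforce
  have "\<not> Suc (z q r) < NN" "Suc (z q r) \<noteq> NN" using z_ge[of q r] by auto
  then show ?thesis unfolding d'_def using z_div[OF r] by simp
qed

lemma reach_cyc: assumes q: "q \<in> Qc" shows "r < per q \<Longrightarrow> reach d' {z q r} w = {z q ((r + length w) mod per q)}"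
proof (induction w arbitrary: r)
  case Nil then show ?case by simp
next
  case (Cons x w)
  have p: "0 < per q" using per_props(1)[OF q] .
  have "reach d' {z q r} (x # w) = reach d' {z q (Suc r mod per q)} w" using d'_z[OF q Cons.prems] by simp
  also have "\<dots> = {z q ((Suc r mod per q + length w) mod per q)}" using Cons.IH p by simp
  also have "(Suc r mod per q + length w) mod per q = (r + length (x # w)) mod per q"
    by (simp add: mod_add_left_eq)
  finally show ?case .
qed

lemma reach_chain: "i < NN \<Longrightarrow> reach d' {i} w = (if i + length w < NN then {i + length w}
   else (\<lambda>q. z q ((i + length w) mod per q)) ` Qc)"
proof (induction w arbitrary: i)
  case Nil then show ?case by simp
next
  case (Cons x w)
  show ?case
  proof (cases "Suc i < NN")
    case True
    then have "reach d' {i} (x # w) = reach d' {Suc i} w" by (simp add: d'_def)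
    then show ?thesis using Cons.IH[OF True] by simp
  next
    case False
    then have i: "Suc i = NN" using Cons.prems by simp
    then have "reach d' {i} (x # w) = reach d' ((\<lambda>q. z q (NN mod per q)) ` Qc) w" by (simp add: d'_def)
    also have "\<dots> = (\<Union>q\<in>Qc. reach d' {z q (NN mod per q)} w)" by (subst reach_Un) simp
    also have "\<dots> = (\<Union>q\<in>Qc. {z q ((NN mod per q + length w) mod per q)})"
      using reach_cyc per_props(1) by (intro SUP_cong) auto
    also have "\<dots> = (\<lambda>q. z q ((i + length (x # w)) mod per q)) ` Qc"
    proof -
      have e: "(NN mod per q + length w) mod per q = (i + length (x # w)) mod per q" for q
      proof -
        have "(NN mod per q + length w) mod per q = (NN + length w) mod per q" by (simp add: mod_add_left_eq)
        also have "NN + length w = i + length (x # w)" using i by simp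
        finally show ?thesis .
      qed
      show ?thesis unfolding e by blast
    qed
    finally show ?thesis using i by simp
  qed
qed

lemma memF_z: assumes q: "q \<in> Qc" "r < per q" shows "z q r \<in> F' \<longleftrightarrow> r \<in> V q"
proof
  assume "z q r \<in> F'"
  moreover have "\<not> z q r < NN" using z_ge[of q r] by simp
  ultimately obtain q' r' where "q' \<in> Qc" "r' < per q'" "r' \<in> V q'" "z q r = z q' r'"
    unfolding F'_def by auto
  then show "r \<in> V q" using z_inj[of r r' q q'] per_lt_M q by fastforce
next
  assume "r \<in> V q"
  then show "z q r \<in> F'" unfolding F'_def using q by auto
qed

lemma memF_chain: "i < NN \<Longrightarrow> i \<in> F' \<longleftrightarrow> i \<in> Ls"
  unfolding F'_def using z_ge by (auto simp: not_le[symmetric])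

lemma lang_chain: assumes i: "i < NN" shows "lang_from A' {i} = {w. i + length w \<in> Ls}"
proof -
  have "reach d' {i} w \<inter> F' \<noteq> {} \<longleftrightarrow> i + length w \<in> Ls" for w
  proof (cases "i + length w < NN")
    case True then show ?thesis using reach_chain[OF i, of w] memF_chain by simp
  next
    case False
    have "reach d' {i} w \<inter> F' \<noteq> {} \<longleftrightarrow> (\<exists>q\<in>Qc. z q ((i + length w) mod per q) \<in> F')"
      using reach_chain[OF i, of w] False by auto
    also have "\<dots> \<longleftrightarrow> (\<exists>q\<in>Qc. (i + length w) mod per q \<in> V q)"
      using memF_z per_props(1) by (auto simp: mod_less_divisor)
    also have "\<dots> \<longleftrightarrow> (\<exists>q\<in>Qc. i + length w \<in> V q)" using V_mod by blast
    also have "\<dots> \<longleftrightarrow> i + length w \<in> Ls" using K1 False by simp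
    finally show ?thesis .
  qed
  then show ?thesis unfolding A'_def lang_from_def by simp
qed

lemma lang_cyc: assumes q: "q \<in> Qc" "r < per q" shows "lang_from A' {z q r} = {w. r + length w \<in> V q}"
proof -
  have "reach d' {z q r} w \<inter> F' \<noteq> {} \<longleftrightarrow> r + length w \<in> V q" for w
    using reach_cyc[OF q(1) q(2), of w] memF_z[OF q(1), of "(r + length w) mod per q"]
      per_props(1)[OF q(1)] V_mod[OF q(1), of "r + length w"] by (simp add: mod_less_divisor)
  then show ?thesis unfolding A'_def lang_from_def by simp
qed

lemma NN_pos: "0 < NN" unfolding NN_def by simp

lemma wf_A': "wf_nfa A'"
proof -
  have fin: "finite Qc" using finQ unfolding Qc_def by simp
  have "finite Q'" unfolding Q'_def using fin by auto
  moreover have "{0} \<subseteq> Q'" unfolding Q'_def using NN_pos by auto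
  moreover have "F' \<subseteq> Q'" unfolding F'_def Q'_def by auto
  moreover have "\<forall>s\<in>Q'. \<forall>x. d' s x \<subseteq> Q'"
  proof (intro ballI allI)
    fix s x assume s: "s \<in> Q'"
    show "d' s x \<subseteq> Q'"
    proof (cases "s < NN")
      case True
      then show ?thesis unfolding d'_def Q'_def using per_props(1) by (auto simp: mod_less_divisor)
    next
      case False
      then obtain q r where qr: "q \<in> Qc" "r < per q" "s = z q r" using s unfolding Q'_def by auto
      then show ?thesis using d'_z[OF qr(1,2)] per_props(1)[OF qr(1)] unfolding Q'_def
        by (auto simp: mod_less_divisor)
    qed
  qed
  ultimately show ?thesis unfolding wf_nfa_def A'_def by simp
qed

lemma lang_A': "nfa_lang A' = {w. length w \<in> Ls}"
  using lang_chain[OF NN_pos] unfolding nfa_lang_def by (simp add: A'_def)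

lemma sat_B:
  assumes sat: "\<And>x y. fut x = fut y \<Longrightarrow> x \<in> X \<longleftrightarrow> y \<in> X"
  shows "{w::unit list. length w \<in> X} \<in> bool_alg_gen (two_sided_derivs {w. length w \<in> Ls})"
proof (rule bag_saturated)
  define G where "G = (\<lambda>i. {w::unit list. i + length w \<in> Ls}) ` UNIV"
  have eqG: "{w::unit list. i + length w \<in> Ls} = {w. length w \<in> fut i}" for i
    by (simp add: fut_def)
  have "G \<subseteq> (\<lambda>S. {w::unit list. length w \<in> S}) ` range fut" unfolding G_def using eqG by auto
  then show "finite G" using fut_fin finite_subset by blast
  show "G \<subseteq> bool_alg_gen (two_sided_derivs {w. length w \<in> Ls})"
  proof
    fix D assume "D \<in> G"
    then obtain i where D: "D = {w::unit list. i + length w \<in> Ls}" unfolding G_def by blast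
    have "D = two_sided_deriv (replicate i ()) {w. length w \<in> Ls} []"
      unfolding D two_sided_deriv_def by simp
    then show "D \<in> bool_alg_gen (two_sided_derivs {w. length w \<in> Ls})"
      unfolding two_sided_derivs_def by (auto intro: bool_alg_gen.gen)
  qed
  fix a b :: "unit list"
  assume ab: "\<forall>D\<in>G. a \<in> D \<longleftrightarrow> b \<in> D" and a: "a \<in> {w. length w \<in> X}"
  have "i + length a \<in> Ls \<longleftrightarrow> i + length b \<in> Ls" for i
    using ab unfolding G_def by auto
  then have "fut (length a) = fut (length b)" unfolding fut_def by (auto simp: add.commute)
  then show "b \<in> {w. length w \<in> X}" using a sat by blast
qed

lemma subatomic_A': "subatomic {w. length w \<in> Ls} A'"
  unfolding subatomic_def
proof
  fix s assume s: "s \<in> nfa_states A'"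
  show "lang_from A' {s} \<in> bool_alg_gen (two_sided_derivs {w. length w \<in> Ls})"
  proof (cases "s < NN")
    case True
    have "{w::unit list. length w \<in> {x. s + x \<in> Ls}} \<in> bool_alg_gen (two_sided_derivs {w. length w \<in> Ls})"
    proof (rule sat_B)
      fix x y assume "fut x = fut y"
      then have "s \<in> fut x \<longleftrightarrow> s \<in> fut y" by simp
      then show "x \<in> {x. s + x \<in> Ls} \<longleftrightarrow> y \<in> {x. s + x \<in> Ls}"
        unfolding fut_def by (simp add: add.commute)
    qed
    then show ?thesis using lang_chain[OF True] by simp
  next
    case False
    then obtain q r where qr: "q \<in> Qc" "r < per q" "s = z q r"
      using s unfolding Q'_def A'_def nfa_states_def by auto
    have "{w::unit list. length w \<in> {x. r + x \<in> V q}} \<in> bool_alg_gen (two_sided_derivs {w. length w \<in> Ls})"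
    proof (rule sat_B)
      fix x y assume "fut x = fut y"
      then have "fut (x + r) = fut (y + r)" by (rule fut_shift)
      then have "x + r \<in> V q \<longleftrightarrow> y + r \<in> V q" by (rule V_sat)
      then show "x \<in> {x. r + x \<in> V q} \<longleftrightarrow> y \<in> {x. r + x \<in> V q}"
        by (simp add: add.commute)
    qed
    then show ?thesis using lang_cyc[OF qr(1,2)] qr(3) by simp
  qed
qed

lemma card_A': "card (nfa_states A') \<le> NN + nQ * nQ"
proof -
  have fin: "finite Qc" using finQ unfolding Qc_def by simp
  have cQc: "card Qc \<le> nQ" unfolding nQ_def Qc_def using finQ by (intro card_mono) auto
  have "card Q' \<le> card {..<NN} + card ((\<lambda>(q, r). z q r) ` (SIGMA q:Qc. {..<per q}))"
    unfolding Q'_def by (rule card_Un_le)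
  also have "card ((\<lambda>(q, r). z q r) ` (SIGMA q:Qc. {..<per q})) \<le> card (SIGMA q:Qc. {..<per q})"
    by (rule card_image_le) (use fin in auto)
  also have "card (SIGMA q:Qc. {..<per q}) = (\<Sum>q\<in>Qc. per q)" using fin by simp
  also have "\<dots> \<le> card Qc * nQ" using sum_bounded_above[of Qc per nQ] per_props(2) by simp
  also have "\<dots> \<le> nQ * nQ" using cQc by simp
  finally show ?thesis unfolding A'_def nfa_states_def by simp
qed

lemma lang_orig: "lang_from (Q, I, F, d) I = {w. length w \<in> Ls}"
proof -
  have "reach d I w \<inter> F \<noteq> {} \<longleftrightarrow> length w \<in> Ls" for w :: "unit list"
    unfolding Ls_def R_def using reach_walk[of _ d I w] by blast
  then show ?thesis unfolding lang_from_def by simp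
qed

end

theorem corollary5p4:
  shows "\<exists>C::nat. \<forall>L :: unit list set. regular L \<longrightarrow> nsyn L \<le> C * (ns L)^2"
proof (intro exI[of _ 4] allI impI)
  fix L :: "unit list set"
  assume "regular L"
  then obtain A0 where A0: "wf_nfa A0" "nfa_lang A0 = L" unfolding regular_def by blast
  have ex: "\<exists>n A. wf_nfa A \<and> nfa_lang A = L \<and> card (nfa_states A) = n" using A0 by blast
  obtain A where A: "wf_nfa A" "nfa_lang A = L" "card (nfa_states A) = ns L"
    using LeastI_ex[OF ex] unfolding ns_def by blast
  obtain Q I F d where Aq: "A = (Q, I, F, d)" by (cases A) auto
  have wf: "finite Q" "I \<subseteq> Q" "F \<subseteq> Q" "\<forall>q\<in>Q. \<forall>x. d q x \<subseteq> Q" using A(1) unfolding wf_nfa_def Aq by auto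
  interpret unfa Q I F d using wf by unfold_locales auto
  have L: "L = {w. length w \<in> Ls}" using A(2) lang_orig unfolding nfa_lang_def Aq by simp
  have nQ: "nQ = ns L" using A(3) unfolding nQ_def Aq nfa_states_def by simp
  show "nsyn L \<le> 4 * (ns L)^2"
  proof (cases "ns L = 0")
    case True
    then have "Q = {}" using nQ wf(1) unfolding nQ_def by simp
    then have "subatomic L A" unfolding subatomic_def Aq nfa_states_def by simp
    then have "nsyn L \<le> card (nfa_states A)" unfolding nsyn_def using A by (intro Least_le) blast
    then show ?thesis using A(3) True by simp
  next
    case False
    have "nsyn L \<le> card (nfa_states A')" unfolding nsyn_def using wf_A' lang_A' subatomic_A' L
      by (intro Least_le) blast
    also have "\<dots> \<le> NN + nQ * nQ" by (rule card_A')
    also have "\<dots> \<le> 4 * (ns L)^2" using False nQ unfolding NN_def by (simp add: power2_eq_square)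
    finally show ?thesis .
  qed
qed

end
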